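(* Every compact ultrametric space $(X,d)$ is $1$-monotone, i.e. there exists a linear order $<$ on $X$ such that $\operatorname{diam}(\{x\in X: a\le x\le b\})\le d(a,b)$ for all $a,b\in X$.
   Context: An ultrametric space is a metric space $(X,d)$ satisfying $d(x,y)\le\max(d(x,z),d(y,z))$ for all $x,y,z\in X$. A metric space is $C$-monotone if there is a linear order $<$ on it with $\operatorname{diam}([a,b])\le C\,d(a,b)$ for all $a,b$, where $[a,b]=\{x: a\le x\le b\}$. *)

theory Defs
  imports "HOL-Analysis.Analysis"
begin

end

theory Submission
  imports Defs
begin

theorem lemma2p3:
  fixes X :: "'a::metric_space set"
  assumes "compact X"
    and "\<forall>x\<in>X. \<forall>y\<in>X. \<forall>z\<in>X. dist x y \<le> max (dist x z) (dist y z)"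
  shows "\<exists>r. linear_order_on X r \<and>
           (\<forall>a\<in>X. \<forall>b\<in>X. diameter {x\<in>X. (a, x) \<in> r \<and> (x, b) \<in> r} \<le> dist a b)"
proof -
  have U: "dist x y \<le> max (dist x z) (dist y z)" if "x\<in>X" "y\<in>X" "z\<in>X" for x y z
    using assms(2) that by blast
  obtain W where W: "well_order_on X W" using well_order_on by blast
  have Wl: "linear_order_on X W" using W unfolding well_order_on_def by blast
  hence WX: "W \<subseteq> X \<times> X" and Wt: "trans W" and Wa: "antisym W" and Wtot: "total_on X W"
    unfolding linear_order_on_def partial_order_on_def preorder_on_def by blast+
  define C where "C t u = {w\<in>X. dist u w < t}" for t u
  define K where "K t u = (SOME v. v \<in> C t u)" for t u
  have KC: "K t u \<in> C t u" if "u \<in> X" "0 < t" for t u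
  proof -
    have "u \<in> C t u" using that by (simp add: C_def)
    thus ?thesis unfolding K_def by (rule someI)
  qed
  have KX: "K t u \<in> X" if "u \<in> X" "0 < t" for t u
    using KC[OF that] by (simp add: C_def)
  have Keq: "K t x = K t z" if "x\<in>X" "z\<in>X" "dist x z < t" for t x z
  proof -
    have "C t x = C t z"
    proof (auto simp: C_def)
      fix w assume "w \<in> X" "dist x w < t"
      thus "dist z w < t" using U[of z w x] that by (auto simp: dist_commute)
    next
      fix w assume "w \<in> X" "dist z w < t"
      thus "dist x w < t" using U[of x w z] that by (auto simp: dist_commute)
    qed
    thus ?thesis by (simp add: K_def)
  qed
  have Kne: "K t x \<noteq> K t y" if "x\<in>X" "y\<in>X" "x \<noteq> y" "dist x y = t" for t x y
  proof
    assume e: "K t x = K t y"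
    have t: "0 < t" using that by (metis zero_less_dist_iff)
    have "K t x \<in> C t x" "K t y \<in> C t y" using KC t that by auto
    then obtain w where "w \<in> X" "dist x w < t" "dist y w < t" using e by (auto simp: C_def)
    thus False using U[of x y w] that by auto
  qed
  define R where "R = {(x,y). x\<in>X \<and> y\<in>X \<and> (x = y \<or> (K (dist x y) x, K (dist x y) y) \<in> W)}"
  have Wanti: "u = v" if "(u,v) \<in> W" "(v,u) \<in> W" for u v
    using Wa that unfolding antisym_def by blast
  have Wtr: "(u,w) \<in> W" if "(u,v) \<in> W" "(v,w) \<in> W" for u v w
    using Wt that unfolding trans_def by blast
  have lin: "linear_order_on X R"
    unfolding linear_order_on_def partial_order_on_def preorder_on_def
  proof (intro conjI)
    show "R \<subseteq> X \<times> X" by (auto simp: R_def)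
    show "refl_on X R" by (auto simp: R_def refl_on_def)
    show "antisym R"
    proof (rule antisymI)
      fix x y assume h0: "(x,y) \<in> R" "(y,x) \<in> R"
      have h: "(x,y) \<in> R \<and> (y,x) \<in> R" using h0 by blast
      show "x = y"
      proof (rule ccontr)
        assume n: "x \<noteq> y"
        have "x \<in> X" "y \<in> X" using h by (auto simp: R_def)
        moreover have "(K (dist x y) x, K (dist x y) y) \<in> W" "(K (dist x y) y, K (dist x y) x) \<in> W"
          using h n by (auto simp: R_def dist_commute)
        ultimately show False using Kne[of x y "dist x y"] n Wanti by metis
      qed
    qed
    show "total_on X R"
      unfolding total_on_def
    proof (intro ballI impI)
      fix x y assume xy: "x \<in> X" "y \<in> X" "x \<noteq> y"
      have t: "0 < dist x y" using xy by simp
      have "K (dist x y) x \<noteq> K (dist x y) y" using Kne xy by blast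
      moreover have "K (dist x y) x \<in> X" "K (dist x y) y \<in> X" using KX t xy by auto
      ultimately have "(K (dist x y) x, K (dist x y) y) \<in> W \<or> (K (dist x y) y, K (dist x y) x) \<in> W"
        using Wtot unfolding total_on_def by blast
      thus "(x, y) \<in> R \<or> (y, x) \<in> R" using xy by (auto simp: R_def dist_commute)
    qed
    show "trans R"
    proof (rule transI)
      fix x y z assume h: "(x,y) \<in> R" "(y,z) \<in> R"
      have X: "x \<in> X" "y \<in> X" "z \<in> X" using h by (auto simp: R_def)
      show "(x,z) \<in> R"
      proof (cases "x = y \<or> y = z \<or> x = z")
        case True
        then show ?thesis using h X by (auto simp: R_def)
      next
        case False
        define a where "a = dist x y"
        define b where "b = dist y z"
        define c where "c = dist x z"
        have hxy: "(K a x, K a y) \<in> W" using h(1) False by (auto simp: R_def a_def)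
        have hyz: "(K b y, K b z) \<in> W" using h(2) False by (auto simp: R_def b_def)
        have u1: "a \<le> max b c" using U[of x y z] X by (simp add: a_def b_def c_def dist_commute)
        have u2: "b \<le> max a c" using U[of y z x] X by (simp add: a_def b_def c_def dist_commute)
        have u3: "c \<le> max a b" using U[of x z y] X by (simp add: a_def b_def c_def dist_commute)
        have "(K c x, K c z) \<in> W"
        proof -
          consider "a = b" "b = c" | "a < b" "b = c" | "b < a" "a = c" | "c < a" "a = b"
            using u1 u2 u3 by linarith
          then show ?thesis
          proof cases
            case 1 then show ?thesis using hxy hyz Wtr by metis
          next
            case 2
            have "K c x = K c y" using Keq[of x y c] X 2 by (simp add: a_def)
            then show ?thesis using hyz 2 by simp
          next
            case 3
            have "K c y = K c z" using Keq[of y z c] X 3 by (simp add: b_def)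
            then show ?thesis using hxy 3 by simp
          next
            case 4
            have e: "K a x = K a z" using Keq[of x z a] X 4 by (simp add: c_def)
            have "(K a y, K a x) \<in> W" using hyz 4 e by simp
            hence "K a x = K a y" using hxy Wanti by blast
            moreover have "K a x \<noteq> K a y" using Kne[of x y a] X False by (simp add: a_def)
            ultimately show ?thesis by blast
          qed
        qed
        then show ?thesis using X by (auto simp: R_def c_def)
      qed
    qed
  qed
  have key: "dist a x \<le> dist a b" if ab: "a \<in> X" "b \<in> X" and x: "x \<in> X" "(a,x) \<in> R" "(x,b) \<in> R" for a b x
  proof (rule ccontr)
    assume nt: "\<not> dist a x \<le> dist a b"
    define t where "t = dist a x"
    have lt: "dist a b < t" using nt by (simp add: t_def)
    have xa: "x \<noteq> a" using lt by (auto simp: t_def)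
    have xb: "x \<noteq> b" using lt by (auto simp: t_def)
    have dxb: "dist x b = t"
    proof -
      have "dist x b \<le> max (dist x a) (dist b a)" using U[of x b a] ab x by simp
      moreover have "dist a x \<le> max (dist a b) (dist x b)" using U[of a x b] ab x by simp
      ultimately show ?thesis using lt by (simp add: t_def dist_commute)
    qed
    have 1: "(K t a, K t x) \<in> W" using x xa by (auto simp: R_def t_def)
    have 2: "(K t x, K t b) \<in> W" using x xb dxb by (auto simp: R_def)
    have "K t b = K t a" using Keq[of a b t] ab lt by simp
    hence "K t a = K t x" using 1 2 Wanti by simp
    thus False using Kne[of a x t] ab x xa by (simp add: t_def)
  qed
  have "diameter {x\<in>X. (a, x) \<in> R \<and> (x, b) \<in> R} \<le> dist a b" if ab: "a \<in> X" "b \<in> X" for a b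
  proof -
    define S where "S = {x\<in>X. (a, x) \<in> R \<and> (x, b) \<in> R}"
    have d: "dist x y \<le> dist a b" if "x \<in> S" "y \<in> S" for x y
    proof -
      have "dist x y \<le> max (dist x a) (dist y a)" using U[of x y a] that ab by (simp add: S_def)
      moreover have "dist a x \<le> dist a b" "dist a y \<le> dist a b" using key that ab by (auto simp: S_def)
      ultimately show ?thesis by (simp add: dist_commute)
    qed
    have "diameter S \<le> dist a b"
    proof (cases "S = {}")
      case True then show ?thesis by (simp add: diameter_def)
    next
      case False
      then have "S \<times> S \<noteq> {}" by simp
      then have "(SUP (x,y)\<in>S\<times>S. dist x y) \<le> dist a b"
        by (rule cSUP_least) (use d in auto)
      then show ?thesis using False by (simp add: diameter_def)
    qed
    thus ?thesis by (simp add: S_def)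
  qed
  thus ?thesis using lin by blast
qed

end
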